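(* Let $\mathcal P$ be finite, $\sigma$ a switching signal, and $a_p^i:\mathbb R_{\ge0}\to\mathbb R$ ($i\in\{1,\dots,m\}$, $p\in\mathcal P$) locally Lebesgue integrable functions. (1) Let $\hat a_p^i:=\limsup_{t\to\infty:\,\sigma(t)=p}a_p^i(t)$. If $\hat a_p^i$ is finite for all $i$ and all $p\in\mathcal P_\infty$, then $$\limsup_{T\to\infty}\sum_{i=1}^m\frac1T\max_{t\in[0,T]}\sum_{p\in\mathcal P}\int_0^ta_p^i(s)\mathbf 1[\sigma(s)=p]\,ds\le\limsup_{T\to\infty}\sum_{i=1}^m\frac1T\max_{t\in[0,T]}\sum_{p\in\mathcal P_+}\hat a_p^i\tau_p(t).$$ (2) Let $\check a_p^i:=\liminf_{t\to\infty:\,\sigma(t)=p}a_p^i(t)$. If $\check a_p^i$ is finite for all $i$ and all $p\in\mathcal P_\infty$, then $$\limsup_{T\to\infty}\sum_{i=1}^m\frac1T\max_{t\in[0,T]}\sum_{p\in\mathcal P}\int_0^ta_p^i(s)\mathbf 1[\sigma(s)=p]\,ds\ge\limsup_{T\to\infty}\sum_{i=1}^m\frac1T\max_{t\in[0,T]}\sum_{p\in\mathcal P_+}\check a_p^i\tau_p(t)$$ and $$\limsup_{t\to\infty}\sum_{i=1}^m\max\Big\{\frac1t\sum_{p\in\mathcal P}\int_0^ta_p^i(s)\mathbf 1[\sigma(s)=p]\,ds,\,0\Big\}\ge\limsup_{t\to\infty}\sum_{i=1}^m\max\Big\{\sum_{p\in\mathcal P_+}\check a_p^i\rho_p(t)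,\,0\Big\}.$$
   Context: A switching signal is a right-continuous piecewise-constant $\sigma:\mathbb R_{\ge0}\to\mathcal P$ with finitely many switches in every bounded interval. $\tau_p(t):=\int_0^t\mathbf 1[\sigma(s)=p]ds$, $\rho_p(t):=\tau_p(t)/t$ for $t>0$ ($\rho_p(0):=\mathbf 1[\sigma(0)=p]$), $\hat\rho_p:=\limsup_{t\to\infty}\rho_p(t)$, $\mathcal P_\infty:=\{p:\sup\{t\ge0:\sigma(t)=p\}=\infty\}$, $\mathcal P_+:=\{p:\hat\rho_p>0\}$. $\limsup_{t\to\infty:\sigma(t)=p}g(t):=\lim_{s\to\infty}\sup\{g(t):t\ge s,\sigma(t)=p\}$, and analogously for $\liminf$. *)

theory Defs
  imports "HOL-Analysis.Analysis"
begin

definition switching_signal :: "'p set \<Rightarrow> (real \<Rightarrow> 'p) \<Rightarrow> bool" where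
  "switching_signal P \<sigma> \<longleftrightarrow>
     (\<forall>t\<ge>0. \<sigma> t \<in> P) \<and>
     (\<forall>T>0. \<exists>ts::real list. ts \<noteq> [] \<and> sorted_wrt (<) ts \<and> hd ts = 0 \<and> last ts = T \<and>
        (\<forall>j < length ts - 1. \<forall>s \<in> {ts!j..<ts!(j+1)}. \<sigma> s = \<sigma> (ts!j)))"

definition tau :: "(real \<Rightarrow> 'p) \<Rightarrow> 'p \<Rightarrow> real \<Rightarrow> real" where
  "tau \<sigma> p t = (LINT s:{0..t}|lborel. indicator {s. \<sigma> s = p} s)"

definition rho :: "(real \<Rightarrow> 'p) \<Rightarrow> 'p \<Rightarrow> real \<Rightarrow> real" where
  "rho \<sigma> p t = (if t > 0 then tau \<sigma> p t / t else (if \<sigma> 0 = p then 1 else 0))"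

definition rho_hat :: "(real \<Rightarrow> 'p) \<Rightarrow> 'p \<Rightarrow> ereal" where
  "rho_hat \<sigma> p = Limsup at_top (\<lambda>t. ereal (rho \<sigma> p t))"

definition P_inf :: "'p set \<Rightarrow> (real \<Rightarrow> 'p) \<Rightarrow> 'p set" where
  "P_inf P \<sigma> = {p \<in> P. Sup (ereal ` {t. t \<ge> 0 \<and> \<sigma> t = p}) = \<infinity>}"

definition P_plus :: "'p set \<Rightarrow> (real \<Rightarrow> 'p) \<Rightarrow> 'p set" where
  "P_plus P \<sigma> = {p \<in> P. rho_hat \<sigma> p > 0}"

definition limsup_on :: "(real \<Rightarrow> 'p) \<Rightarrow> 'p \<Rightarrow> (real \<Rightarrow> real) \<Rightarrow> ereal" where
  "limsup_on \<sigma> p g = Limsup (inf at_top (principal {t. \<sigma> t = p})) (\<lambda>t. ereal (g t))"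

definition liminf_on :: "(real \<Rightarrow> 'p) \<Rightarrow> 'p \<Rightarrow> (real \<Rightarrow> real) \<Rightarrow> ereal" where
  "liminf_on \<sigma> p g = Liminf (inf at_top (principal {t. \<sigma> t = p})) (\<lambda>t. ereal (g t))"

definition accum :: "'p set \<Rightarrow> (real \<Rightarrow> 'p) \<Rightarrow> ('p \<Rightarrow> real \<Rightarrow> real) \<Rightarrow> real \<Rightarrow> real" where
  "accum P \<sigma> a t = (\<Sum>p\<in>P. LINT s:{0..t}|lborel. a p s * indicator {s. \<sigma> s = p} s)"

end

theory Submission
  imports Defs
begin


lemma cover_list:
  fixes ts :: "real list"
  shows "ts \<noteq> [] \<Longrightarrow> hd ts \<le> s \<Longrightarrow> s < last ts \<Longrightarrow> \<exists>j < length ts - 1. ts!j \<le> s \<and> s < ts!(j+1)"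
proof (induction ts)
  case Nil then show ?case by simp
next
  case (Cons x rest)
  show ?case
  proof (cases rest)
    case Nil then show ?thesis using Cons by simp
  next
    case (Cons y r)
    show ?thesis
    proof (cases "s < y")
      case True then show ?thesis using Cons Cons.prems by (auto intro!: exI[of _ 0])
    next
      case False
      then obtain j where "j < length rest - 1" "rest!j \<le> s" "s < rest!(j+1)"
        using Cons.IH Cons.prems Cons by auto
      then show ?thesis using Cons by (auto intro!: exI[of _ "Suc j"])
    qed
  qed
qed

lemma sig_meas:
  assumes sw: "switching_signal P \<sigma>"
  shows "{0..T} \<inter> {s. \<sigma> s = p} \<in> sets lborel"
proof (cases "T > 0")
  case False
  then have "{0..T} \<inter> {s. \<sigma> s = p} \<subseteq> {0}" by auto
  then have "finite ({0..T} \<inter> {s. \<sigma> s = p})" using finite_subset by blast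
  then show ?thesis by (simp add: finite_imp_closed borel_closed)
next
  case True
  then obtain ts :: "real list" where ts: "ts \<noteq> []" "hd ts = 0" "last ts = T"
    "\<forall>j < length ts - 1. \<forall>s \<in> {ts!j..<ts!(j+1)}. \<sigma> s = \<sigma> (ts!j)"
    using sw unfolding switching_signal_def by blast
  define B where "B j = (if \<sigma> (ts!j) = p then {ts!j..<ts!(j+1)} else {})" for j
  have "{0..<T} \<inter> {s. \<sigma> s = p} = {0..<T} \<inter> (\<Union>j<length ts - 1. B j)"
  proof (intro equalityI subsetI)
    fix s assume s: "s \<in> {0..<T} \<inter> {s. \<sigma> s = p}"
    have "hd ts \<le> s" "s < last ts" using s ts(2,3) by auto
    then obtain j where j: "j < length ts - 1" "ts!j \<le> s" "s < ts!(j+1)"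
      using cover_list[OF ts(1)] by blast
    have "\<forall>s'\<in>{ts!j..<ts!(j+1)}. \<sigma> s' = \<sigma> (ts!j)" using ts(4) j(1) by blast
    moreover have "s \<in> {ts!j..<ts!(j+1)}" using j(2,3) by simp
    ultimately have "\<sigma> s = \<sigma> (ts!j)" by (rule bspec)
    then have "s \<in> B j" using s j(2,3) unfolding B_def by auto
    then show "s \<in> {0..<T} \<inter> (\<Union>j<length ts - 1. B j)" using s j(1) by blast
  next
    fix s assume s: "s \<in> {0..<T} \<inter> (\<Union>j<length ts - 1. B j)"
    then obtain j where j: "j < length ts - 1" "s \<in> B j" by blast
    then have 1: "\<sigma> (ts!j) = p" "s \<in> {ts!j..<ts!(j+1)}" unfolding B_def by (simp_all split: if_splits)
    have "\<forall>s'\<in>{ts!j..<ts!(j+1)}. \<sigma> s' = \<sigma> (ts!j)" using ts(4) j(1) by blast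
    then have "\<sigma> s = \<sigma> (ts!j)" using 1(2) by (rule bspec)
    then have "\<sigma> s = p" using 1(1) by (rule trans)
    then show "s \<in> {0..<T} \<inter> {s. \<sigma> s = p}" using s by simp
  qed
  moreover have "B j \<in> sets lborel" for j unfolding B_def by simp
  then have "(\<Union>j<length ts - 1. B j) \<in> sets lborel" by (intro sets.finite_UN) auto
  then have "{0..<T} \<inter> (\<Union>j<length ts - 1. B j) \<in> sets lborel" by (intro sets.Int) auto
  ultimately have m1: "{0..<T} \<inter> {s. \<sigma> s = p} \<in> sets lborel" by simp
  have "{0..T} \<inter> {s. \<sigma> s = p} = ({0..<T} \<inter> {s. \<sigma> s = p}) \<union> ({T} \<inter> {s. \<sigma> s = p})"
    using True by auto
  moreover have "{T} \<inter> {s. \<sigma> s = p} \<in> sets lborel"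
  proof -
    have "finite ({T} \<inter> {s. \<sigma> s = p})" by simp
    then show ?thesis by (simp add: finite_imp_closed borel_closed)
  qed
  ultimately show ?thesis using m1 by (metis sets.Un)
qed

lemma c_eq:
  "(LINT s:{0..t}|lborel. f s * indicator {s. \<sigma> s = p} s) = (LINT s:({0..t}\<inter>{s. \<sigma> s = p})|lborel. (f s::real))"
  unfolding set_lebesgue_integral_def
  by (rule Bochner_Integration.integral_cong) (auto simp: indicator_def)

lemma tau_eq: "tau \<sigma> p t = measure lborel ({0..t}\<inter>{s. \<sigma> s = p})"
proof -
  have "tau \<sigma> p t = integral\<^sup>L lborel (indicator ({0..t}\<inter>{s. \<sigma> s = p}) :: real \<Rightarrow> real)"
    unfolding tau_def set_lebesgue_integral_def
    by (rule Bochner_Integration.integral_cong) (auto simp: indicator_def)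
  then show ?thesis by simp
qed

lemma tau_le:
  assumes sw: "switching_signal P \<sigma>" and "{0..t}\<inter>{s. \<sigma> s = p} \<subseteq> {0..U}" "0 \<le> U"
  shows "tau \<sigma> p t \<le> U" "0 \<le> tau \<sigma> p t"
proof -
  have "measure lborel ({0..t}\<inter>{s. \<sigma> s = p}) \<le> measure lborel {0..U}"
    by (rule measure_mono_fmeasurable) (use assms sig_meas fmeasurable_compact[OF compact_Icc] in auto)
  then show "tau \<sigma> p t \<le> U" using assms by (simp add: tau_eq)
  show "0 \<le> tau \<sigma> p t" by (simp add: tau_eq)
qed

lemma c_abs_bound:
  fixes f :: "real \<Rightarrow> real"
  assumes sw: "switching_signal P \<sigma>" and sub: "{0..t}\<inter>{s. \<sigma> s = p} \<subseteq> {0..U}"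
    and int: "set_integrable lborel {0..U} f"
  shows "\<bar>LINT s:{0..t}|lborel. f s * indicator {s. \<sigma> s = p} s\<bar> \<le> (LINT s:{0..U}|lborel. \<bar>f s\<bar>)"
proof -
  let ?A = "{0..t}\<inter>{s. \<sigma> s = p}"
  have iA: "set_integrable lborel ?A f"
    by (rule set_integrable_subset[OF int]) (use sw sig_meas sub in auto)
  have "\<bar>LINT s:?A|lborel. f s\<bar> \<le> (LINT s:?A|lborel. \<bar>f s\<bar>)"
    using set_integral_norm_bound[OF iA] by simp
  also have "\<dots> \<le> (LINT s:{0..U}|lborel. \<bar>f s\<bar>)"
    unfolding set_lebesgue_integral_def
    apply (rule integral_mono)
    using set_integrable_abs[OF iA] set_integrable_abs[OF int] sub
    by (auto simp: set_integrable_def indicator_def)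
  finally show ?thesis by (simp add: c_eq)
qed


lemma c_upper:
  fixes f :: "real \<Rightarrow> real"
  assumes sw: "switching_signal P \<sigma>" and int: "\<forall>t\<ge>0. set_integrable lborel {0..t} f"
    and s0: "0 \<le> s0" and bnd: "\<forall>t\<ge>s0. \<sigma> t = p \<longrightarrow> f t \<le> Lc" and t: "0 \<le> t"
  shows "(LINT s:{0..t}|lborel. f s * indicator {s. \<sigma> s = p} s)
     \<le> (LINT s:{0..s0}|lborel. \<bar>f s\<bar>) + \<bar>Lc\<bar> * s0 + Lc * tau \<sigma> p t"
proof -
  let ?K = "LINT s:{0..s0}|lborel. \<bar>f s\<bar>"
  let ?S = "{s. \<sigma> s = p}"
  have cs0: "\<bar>LINT s:{0..s0}|lborel. f s * indicator ?S s\<bar> \<le> ?K"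
    by (rule c_abs_bound[OF sw]) (use int s0 in auto)
  show ?thesis
  proof (cases "t \<le> s0")
    case True
    have "\<bar>LINT s:{0..t}|lborel. f s * indicator ?S s\<bar> \<le> ?K"
      by (rule c_abs_bound[OF sw]) (use int s0 True in auto)
    moreover have sub: "{0..t} \<inter> ?S \<subseteq> {0..s0}" using True by auto
    moreover have "tau \<sigma> p t \<le> s0" "0 \<le> tau \<sigma> p t"
      using tau_le[OF sw sub s0] by auto
    moreover have "- \<bar>Lc\<bar> * s0 \<le> Lc * tau \<sigma> p t"
    proof -
      have "\<bar>Lc * tau \<sigma> p t\<bar> \<le> \<bar>Lc\<bar> * s0"
        using calculation(3,4) by (simp add: abs_mult mult_left_mono)
      then show ?thesis by linarith
    qed
    ultimately show ?thesis by linarith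
  next
    case False
    let ?A0 = "{0..s0} \<inter> ?S" and ?B = "{s0<..t} \<inter> ?S" and ?At = "{0..t} \<inter> ?S"
    have m0: "?A0 \<in> sets lborel" "?At \<in> sets lborel" using sig_meas[OF sw] by auto
    have mB: "?B \<in> sets lborel"
    proof -
      have "?B = ?At - ?A0" using False s0 by auto
      then show ?thesis using m0 by auto
    qed
    have un: "?At = ?A0 \<union> ?B" and dj: "?A0 \<inter> ?B = {}" using False s0 by auto
    have it: "set_integrable lborel {0..t} f" using int t by auto
    have iA0: "set_integrable lborel ?A0 f"
      by (rule set_integrable_subset[OF it]) (use m0 False in auto)
    have iB: "set_integrable lborel ?B f"
      by (rule set_integrable_subset[OF it]) (use mB s0 in auto)
    have fin0: "emeasure lborel ?A0 \<noteq> \<infinity>"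
    proof -
      have "emeasure lborel ?A0 \<le> emeasure lborel {0..s0}" by (rule emeasure_mono) auto
      moreover have "emeasure lborel {0..s0} < \<infinity>"
        using fmeasurable_compact[OF compact_Icc, of 0 s0] by (simp add: fmeasurable_def)
      ultimately show ?thesis by (auto simp: top_unique)
    qed
    have finB: "emeasure lborel ?B \<noteq> \<infinity>"
    proof -
      have "emeasure lborel ?B \<le> emeasure lborel {0..t}" by (rule emeasure_mono) (use s0 in auto)
      moreover have "emeasure lborel {0..t} < \<infinity>"
        using fmeasurable_compact[OF compact_Icc, of 0 t] by (simp add: fmeasurable_def)
      ultimately show ?thesis by (auto simp: top_unique)
    qed
    have icB: "set_integrable lborel ?B (\<lambda>_. Lc)"
      unfolding set_integrable_def using mB finB by (auto simp: less_top)
    have "(LINT s:{0..t}|lborel. f s * indicator ?S s) = (LINT s:?At|lborel. f s)" by (rule c_eq)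
    also have "\<dots> = (LINT s:?A0|lborel. f s) + (LINT s:?B|lborel. f s)"
      unfolding un by (rule set_integral_Un[OF dj iA0 iB])
    also have "(LINT s:?B|lborel. f s) \<le> (LINT s:?B|lborel. Lc)"
      by (rule set_integral_mono[OF iB icB]) (use bnd in auto)
    also have "(LINT s:?B|lborel. Lc) = measure lborel ?B * Lc"
      by (subst set_integral_const[OF mB finB]) simp
    also have "measure lborel ?B = tau \<sigma> p t - tau \<sigma> p s0"
      unfolding tau_eq un using measure_Union[OF fin0 finB m0(1) mB dj] by simp
    also have "(LINT s:?A0|lborel. f s) \<le> ?K" using cs0 by (simp add: c_eq)
    finally have 1: "(LINT s:{0..t}|lborel. f s * indicator ?S s) \<le> ?K + (tau \<sigma> p t - tau \<sigma> p s0) * Lc"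
      by simp
    have "tau \<sigma> p s0 \<le> s0" "0 \<le> tau \<sigma> p s0"
      using tau_le[OF sw _ s0, of s0 p] s0 by auto
    then have "\<bar>Lc * tau \<sigma> p s0\<bar> \<le> \<bar>Lc\<bar> * s0" by (simp add: abs_mult mult_left_mono)
    then show ?thesis using 1 by (simp add: algebra_simps)
  qed
qed


lemma per_p:
  fixes f :: "real \<Rightarrow> real"
  assumes sw: "switching_signal P \<sigma>" and pP: "p \<in> P"
    and int: "\<forall>t\<ge>0. set_integrable lborel {0..t} f"
    and fin: "p \<in> P_inf P \<sigma> \<Longrightarrow> \<bar>limsup_on \<sigma> p f\<bar> \<noteq> \<infinity>"
    and e: "e > 0"
  shows "eventually (\<lambda>T. \<forall>t\<in>{0..T}. (LINT s:{0..t}|lborel. f s * indicator {s. \<sigma> s = p} s)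
           \<le> (if p \<in> P_plus P \<sigma> then real_of_ereal (limsup_on \<sigma> p f) * tau \<sigma> p t else 0) + e * T) at_top"
proof -
  let ?L = "real_of_ereal (limsup_on \<sigma> p f)"
  let ?S = "{s. \<sigma> s = p}"
  let ?c = "\<lambda>t. LINT s:{0..t}|lborel. f s * indicator ?S s"
  let ?V = "\<lambda>t. (if p \<in> P_plus P \<sigma> then ?L * tau \<sigma> p t else 0)"
  show ?thesis
  proof (cases "p \<in> P_inf P \<sigma>")
    case False
    then have ne: "Sup (ereal ` {t. t \<ge> 0 \<and> \<sigma> t = p}) \<noteq> \<infinity>" using pP unfolding P_inf_def by auto
    obtain r where r: "Sup (ereal ` {t. t \<ge> 0 \<and> \<sigma> t = p}) \<le> ereal r"
      using ne by (cases "Sup (ereal ` {t. t \<ge> 0 \<and> \<sigma> t = p})") auto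
    define t0 where "t0 = max r 0"
    have t0: "0 \<le> t0" unfolding t0_def by auto
    have bd: "\<forall>t\<ge>0. \<sigma> t = p \<longrightarrow> t \<le> t0"
    proof (intro allI impI)
      fix t :: real assume "t \<ge> 0" "\<sigma> t = p"
      then have "ereal t \<le> Sup (ereal ` {t. t \<ge> 0 \<and> \<sigma> t = p})" by (auto intro: Sup_upper)
      then have "ereal t \<le> ereal r" using r by (rule order_trans)
      then show "t \<le> t0" unfolding t0_def by auto
    qed
    have sub: "{0..t} \<inter> ?S \<subseteq> {0..t0}" for t using bd by auto
    define K where "K = (LINT s:{0..t0}|lborel. \<bar>f s\<bar>) + \<bar>?L\<bar> * t0"
    have main: "?c t \<le> ?V t + K" if "0 \<le> t" for t
    proof -
      have "\<bar>?c t\<bar> \<le> (LINT s:{0..t0}|lborel. \<bar>f s\<bar>)"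
        by (rule c_abs_bound[OF sw sub]) (use int t0 in auto)
      moreover have "\<bar>?V t\<bar> \<le> \<bar>?L\<bar> * t0"
      proof -
        have a: "\<bar>tau \<sigma> p t\<bar> \<le> t0" using tau_le[OF sw sub t0] by auto
        have 1: "\<bar>?L * tau \<sigma> p t\<bar> \<le> \<bar>?L\<bar> * t0"
          unfolding abs_mult by (rule mult_left_mono[OF a abs_ge_zero])
        have 2: "0 \<le> \<bar>?L\<bar> * t0" by (intro mult_nonneg_nonneg abs_ge_zero t0)
        show ?thesis using 1 2 by (cases "p \<in> P_plus P \<sigma>") (simp_all only: if_True if_False abs_zero)
      qed
      ultimately show ?thesis unfolding K_def by linarith
    qed
    have "eventually (\<lambda>T. T \<ge> \<bar>K\<bar> / e) at_top" by (rule eventually_ge_at_top)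
    then show ?thesis
    proof (rule eventually_mono)
      fix T assume T: "T \<ge> \<bar>K\<bar> / e"
      then have "e * T \<ge> \<bar>K\<bar>" using e by (simp add: field_simps)
      then show "\<forall>t\<in>{0..T}. ?c t \<le> ?V t + e * T" using main by force
    qed
  next
    case True
    then have Lf: "limsup_on \<sigma> p f = ereal ?L" using fin by (cases "limsup_on \<sigma> p f") auto
    have ub: "\<exists>s0\<ge>0. \<forall>t\<ge>s0. \<sigma> t = p \<longrightarrow> f t \<le> ?L + d" if d: "d > 0" for d
    proof -
      obtain L0 where L0: "limsup_on \<sigma> p f = ereal L0" using Lf by blast
      have "limsup_on \<sigma> p f < ereal (?L + d)" using d by (simp add: L0)
      then have "eventually (\<lambda>t. ereal (f t) < ereal (?L + d)) (inf at_top (principal ?S))"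
        unfolding limsup_on_def by (rule Limsup_lessD)
      then have "eventually (\<lambda>t. t \<in> ?S \<longrightarrow> f t < ?L + d) at_top"
        by (simp add: eventually_inf_principal)
      then obtain N where N: "\<forall>t\<ge>N. t \<in> ?S \<longrightarrow> f t < ?L + d"
        by (auto simp: eventually_at_top_linorder)
      show ?thesis by (rule exI[of _ "max N 0"]) (use N in auto)
    qed
    show ?thesis
    proof (cases "p \<in> P_plus P \<sigma>")
      case True
      obtain s0 where s0: "s0 \<ge> 0" "\<forall>t\<ge>s0. \<sigma> t = p \<longrightarrow> f t \<le> ?L + e/2"
        using ub[of "e/2"] e by auto
      define K where "K = (LINT s:{0..s0}|lborel. \<bar>f s\<bar>) + \<bar>?L + e/2\<bar> * s0"
      have main: "?c t \<le> ?L * tau \<sigma> p t + K + e/2 * t" if "0 \<le> t" for t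
      proof -
        have "?c t \<le> K + (?L + e/2) * tau \<sigma> p t"
          unfolding K_def by (rule c_upper[OF sw int s0(1) s0(2) that])
        moreover have "tau \<sigma> p t \<le> t" using tau_le[OF sw _ that, of t p] by auto
        then have "e/2 * tau \<sigma> p t \<le> e/2 * t" using e by (intro mult_left_mono) auto
        moreover have "(?L + e/2) * tau \<sigma> p t = ?L * tau \<sigma> p t + e/2 * tau \<sigma> p t"
          by (simp only: distrib_right)
        ultimately show ?thesis by linarith
      qed
      have "eventually (\<lambda>T. T \<ge> 2 * \<bar>K\<bar> / e) at_top" by (rule eventually_ge_at_top)
      then show ?thesis
      proof (rule eventually_mono)
        fix T assume T: "T \<ge> 2 * \<bar>K\<bar> / e"
        then have "e/2 * T \<ge> \<bar>K\<bar>" using e by (simp add: field_simps)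
        moreover have "e/2 * t \<le> e/2 * T" if "t \<le> T" for t using that e by simp
        ultimately show "\<forall>t\<in>{0..T}. ?c t \<le> ?V t + e * T" using main True by fastforce
      qed
    next
      case False
      obtain s0 where s0: "s0 \<ge> 0" "\<forall>t\<ge>s0. \<sigma> t = p \<longrightarrow> f t \<le> ?L + 1"
        using ub[of 1] by auto
      define M where "M = \<bar>?L + 1\<bar>"
      define K where "K = (LINT s:{0..s0}|lborel. \<bar>f s\<bar>) + M * s0"
      define \<delta> where "\<delta> = e / (2 * (M + 1))"
      have M: "M \<ge> 0" unfolding M_def by simp
      have \<delta>: "\<delta> > 0" unfolding \<delta>_def using e M by simp
      have "rho_hat \<sigma> p \<le> 0" using False pP unfolding P_plus_def by auto
      moreover have "(0::ereal) < ereal \<delta>" using \<delta> by simp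
      ultimately have "Limsup at_top (\<lambda>t. ereal (rho \<sigma> p t)) < ereal \<delta>" unfolding rho_hat_def
        by (rule le_less_trans)
      then have "eventually (\<lambda>t. ereal (rho \<sigma> p t) < ereal \<delta>) at_top" by (rule Limsup_lessD)
      then obtain N where N: "\<forall>t\<ge>N. rho \<sigma> p t < \<delta>" by (auto simp: eventually_at_top_linorder)
      define t1 where "t1 = max N 1"
      have t1: "t1 \<ge> 0" unfolding t1_def by simp
      have taub: "tau \<sigma> p t \<le> t1 + \<delta> * t" if "0 \<le> t" for t
      proof (cases "t \<ge> t1")
        case True
        then have "t > 0" "t \<ge> N" unfolding t1_def by auto
        then have "tau \<sigma> p t / t < \<delta>" using N unfolding rho_def by auto
        then have "tau \<sigma> p t < \<delta> * t" using \<open>t > 0\<close> by (simp add: field_simps)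
        then show ?thesis using t1 by simp
      next
        case False
        have "tau \<sigma> p t \<le> t" using tau_le[OF sw _ that, of t p] by auto
        then show ?thesis using False \<delta> that by (smt (verit) mult_nonneg_nonneg)
      qed
      have main: "?c t \<le> K + M * t1 + e/2 * T" if "0 \<le> t" "t \<le> T" for t T
      proof -
        have "?c t \<le> K + (?L + 1) * tau \<sigma> p t"
          unfolding K_def M_def by (rule c_upper[OF sw int s0(1) s0(2) that(1)])
        also have "(?L + 1) * tau \<sigma> p t \<le> M * tau \<sigma> p t"
          using tau_le[OF sw _ that(1), of t p] unfolding M_def
          by (intro mult_right_mono) auto
        also have "M * tau \<sigma> p t \<le> M * (t1 + \<delta> * T)"
        proof -
          have "tau \<sigma> p t \<le> t1 + \<delta> * T" using taub[OF that(1)] that \<delta>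
            by (smt (verit) mult_left_mono)
          then show ?thesis by (rule mult_left_mono[OF _ M])
        qed
        also have "M * (t1 + \<delta> * T) \<le> M * t1 + e/2 * T"
        proof -
          have "M * \<delta> \<le> e/2" unfolding \<delta>_def using M e by (simp add: field_simps)
          moreover have "T \<ge> 0" using that by simp
          ultimately have "M * \<delta> * T \<le> e/2 * T" by (rule mult_right_mono)
          then show ?thesis by (simp add: algebra_simps)
        qed
        finally show ?thesis by simp
      qed
      have "eventually (\<lambda>T. T \<ge> 2 * \<bar>K + M * t1\<bar> / e) at_top" by (rule eventually_ge_at_top)
      then show ?thesis
      proof (rule eventually_mono)
        fix T assume T: "T \<ge> 2 * \<bar>K + M * t1\<bar> / e"
        then have "e/2 * T \<ge> \<bar>K + M * t1\<bar>" using e by (simp add: field_simps)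
        then have KT: "K + M * t1 + e/2 * T \<le> e * T" by linarith
        show "\<forall>t\<in>{0..T}. ?c t \<le> ?V t + e * T"
        proof
          fix t assume "t \<in> {0..T}"
          then have "?c t \<le> K + M * t1 + e/2 * T" using main by auto
          then show "?c t \<le> ?V t + e * T" using KT False by simp
        qed
      qed
    qed
  qed
qed

lemma limsup_eps:
  fixes X Y :: "'a \<Rightarrow> real"
  assumes F: "F \<noteq> bot" and ev: "\<And>e. e > 0 \<Longrightarrow> eventually (\<lambda>x. X x \<le> Y x + e) F"
  shows "Limsup F (\<lambda>x. ereal (X x)) \<le> Limsup F (\<lambda>x. ereal (Y x))"
proof (rule ereal_le_epsilon2)
  fix e :: real assume e: "e > 0"
  have "Limsup F (\<lambda>x. ereal (X x)) \<le> Limsup F (\<lambda>x. ereal (Y x) + ereal e)"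
    by (rule Limsup_mono) (use ev[OF e] in \<open>auto elim: eventually_mono\<close>)
  also have "\<dots> = Limsup F (\<lambda>x. ereal (Y x)) + ereal e"
    by (rule Limsup_add_ereal_right[OF F]) simp
  finally show "Limsup F (\<lambda>x. ereal (X x)) \<le> Limsup F (\<lambda>x. ereal (Y x)) + ereal e" .
qed

lemma accum_upper:
  fixes f :: "'p \<Rightarrow> real \<Rightarrow> real"
  assumes finP: "finite P" and sw: "switching_signal P \<sigma>"
    and int: "\<forall>p\<in>P. \<forall>t\<ge>0. set_integrable lborel {0..t} (f p)"
    and fin: "\<forall>p\<in>P_inf P \<sigma>. \<bar>limsup_on \<sigma> p (f p)\<bar> \<noteq> \<infinity>"
    and e: "(e::real) > 0"
  shows "eventually (\<lambda>T. \<forall>t\<in>{0..T}. accum P \<sigma> f t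
     \<le> (\<Sum>p\<in>P_plus P \<sigma>. real_of_ereal (limsup_on \<sigma> p (f p)) * tau \<sigma> p t) + e * T) at_top"
proof -
  define e' where "e' = e / (real (card P) + 1)"
  have e': "e' > 0" unfolding e'_def using e by simp
  have ce: "real (card P) * e' \<le> e" unfolding e'_def using e by (simp add: field_simps)
  have "eventually (\<lambda>T. \<forall>p\<in>P. \<forall>t\<in>{0..T}. (LINT s:{0..t}|lborel. f p s * indicator {s. \<sigma> s = p} s)
           \<le> (if p \<in> P_plus P \<sigma> then real_of_ereal (limsup_on \<sigma> p (f p)) * tau \<sigma> p t else 0) + e' * T) at_top"
    by (rule eventually_ball_finite[OF finP]) (use per_p[OF sw _ _ _ e'] int fin in auto)
  moreover have "eventually (\<lambda>T::real. T \<ge> 0) at_top" by (rule eventually_ge_at_top)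
  ultimately show ?thesis
  proof eventually_elim
    case (elim T)
    show ?case
    proof
      fix t assume t: "t \<in> {0..T}"
      have "accum P \<sigma> f t \<le> (\<Sum>p\<in>P. (if p \<in> P_plus P \<sigma> then real_of_ereal (limsup_on \<sigma> p (f p)) * tau \<sigma> p t else 0) + e' * T)"
        unfolding accum_def by (rule sum_mono) (use elim t in auto)
      also have "\<dots> = (\<Sum>p\<in>P. (if p \<in> P_plus P \<sigma> then real_of_ereal (limsup_on \<sigma> p (f p)) * tau \<sigma> p t else 0)) + real (card P) * e' * T"
        by (simp add: sum.distrib)
      also have "(\<Sum>p\<in>P. (if p \<in> P_plus P \<sigma> then real_of_ereal (limsup_on \<sigma> p (f p)) * tau \<sigma> p t else 0))
          = (\<Sum>p\<in>P_plus P \<sigma>. real_of_ereal (limsup_on \<sigma> p (f p)) * tau \<sigma> p t)"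
      proof -
        have "P \<inter> {p. p \<in> P_plus P \<sigma>} = P_plus P \<sigma>" unfolding P_plus_def by auto
        then show ?thesis by (simp add: sum.If_cases[OF finP])
      qed
      also have "real (card P) * e' * T \<le> e * T" using ce elim by (intro mult_right_mono) auto
      finally show "accum P \<sigma> f t \<le> (\<Sum>p\<in>P_plus P \<sigma>. real_of_ereal (limsup_on \<sigma> p (f p)) * tau \<sigma> p t) + e * T"
        by simp
    qed
  qed
qed

lemma set_integrable_neg: "set_integrable M A f \<Longrightarrow> set_integrable M A (\<lambda>x. - (f x::real))"
  using set_integrable_mult_right[of "-1" M A f] by simp

lemma accum_lower:
  fixes f :: "'p \<Rightarrow> real \<Rightarrow> real"
  assumes finP: "finite P" and sw: "switching_signal P \<sigma>"
    and int: "\<forall>p\<in>P. \<forall>t\<ge>0. set_integrable lborel {0..t} (f p)"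
    and fin: "\<forall>p\<in>P_inf P \<sigma>. \<bar>liminf_on \<sigma> p (f p)\<bar> \<noteq> \<infinity>"
    and e: "(e::real) > 0"
  shows "eventually (\<lambda>T. \<forall>t\<in>{0..T}.
     (\<Sum>p\<in>P_plus P \<sigma>. real_of_ereal (liminf_on \<sigma> p (f p)) * tau \<sigma> p t) \<le> accum P \<sigma> f t + e * T) at_top"
proof -
  define g where "g p s = - f p s" for p s
  have lim: "limsup_on \<sigma> p (g p) = - liminf_on \<sigma> p (f p)" for p
    unfolding limsup_on_def liminf_on_def g_def
    using ereal_Limsup_uminus[of _ "\<lambda>t. ereal (f p t)"] by simp
  have intg: "\<forall>p\<in>P. \<forall>t\<ge>0. set_integrable lborel {0..t} (g p)"
    using int unfolding g_def by (auto intro: set_integrable_neg)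
  have fing: "\<forall>p\<in>P_inf P \<sigma>. \<bar>limsup_on \<sigma> p (g p)\<bar> \<noteq> \<infinity>" using fin by (simp add: lim)
  have acc: "accum P \<sigma> g t = - accum P \<sigma> f t" for t
    unfolding accum_def g_def sum_negf[symmetric]
    by (rule sum.cong[OF refl]) (simp add: set_lebesgue_integral_def)
  have rs: "(\<Sum>p\<in>P_plus P \<sigma>. real_of_ereal (limsup_on \<sigma> p (g p)) * tau \<sigma> p t)
     = - (\<Sum>p\<in>P_plus P \<sigma>. real_of_ereal (liminf_on \<sigma> p (f p)) * tau \<sigma> p t)" for t
    unfolding lim sum_negf[symmetric] by (rule sum.cong[OF refl]) simp
  show ?thesis using accum_upper[OF finP sw intg fing e] unfolding acc rs
    by (auto elim!: eventually_mono)
qed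



lemma sum_sup_bound:
  fixes u v :: "nat \<Rightarrow> real \<Rightarrow> real"
  assumes I: "finite I" and T: "T > 0"
    and le: "\<forall>i\<in>I. \<forall>t\<in>{0..T}. u i t \<le> v i t + e * T"
    and bdd: "\<forall>i\<in>I. bdd_above (v i ` {0..T})"
  shows "(\<Sum>i\<in>I. (1/T) * (SUP t\<in>{0..T}. u i t)) \<le> (\<Sum>i\<in>I. (1/T) * (SUP t\<in>{0..T}. v i t)) + real (card I) * e"
proof -
  have "(\<Sum>i\<in>I. (1/T) * (SUP t\<in>{0..T}. u i t)) \<le> (\<Sum>i\<in>I. (1/T) * (SUP t\<in>{0..T}. v i t) + e)"
  proof (rule sum_mono)
    fix i assume i: "i \<in> I"
    have "(SUP t\<in>{0..T}. u i t) \<le> (SUP t\<in>{0..T}. v i t) + e * T"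
    proof (rule cSUP_least)
      show "{0..T} \<noteq> {}" using T by auto
      fix t assume t: "t \<in> {0..T}"
      have "v i t \<le> (SUP t\<in>{0..T}. v i t)" by (rule cSUP_upper[OF t]) (use bdd i in auto)
      then show "u i t \<le> (SUP t\<in>{0..T}. v i t) + e * T" using le i t by fastforce
    qed
    then have "(1/T) * (SUP t\<in>{0..T}. u i t) \<le> (1/T) * ((SUP t\<in>{0..T}. v i t) + e * T)"
      using T by (intro mult_left_mono) auto
    also have "\<dots> = (1/T) * (SUP t\<in>{0..T}. v i t) + e" using T by (simp add: field_simps)
    finally show "(1/T) * (SUP t\<in>{0..T}. u i t) \<le> (1/T) * (SUP t\<in>{0..T}. v i t) + e" .
  qed
  also have "\<dots> = (\<Sum>i\<in>I. (1/T) * (SUP t\<in>{0..T}. v i t)) + real (card I) * e"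
    by (simp add: sum.distrib)
  finally show ?thesis .
qed

lemma G_bdd:
  assumes sw: "switching_signal P \<sigma>" and T: "0 \<le> T"
  shows "bdd_above ((\<lambda>t. \<Sum>p\<in>Q. L p * tau \<sigma> p t) ` {0..T})"
proof (rule bdd_aboveI2)
  fix t assume t: "t \<in> {0..T}"
  show "(\<Sum>p\<in>Q. L p * tau \<sigma> p t) \<le> (\<Sum>p\<in>Q. \<bar>L p\<bar> * T)"
  proof (rule sum_mono)
    fix p
    have "tau \<sigma> p t \<le> t" "0 \<le> tau \<sigma> p t" using tau_le[OF sw _, of t p t] t by auto
    then have "\<bar>tau \<sigma> p t\<bar> \<le> T" using t by auto
    then have "\<bar>L p\<bar> * \<bar>tau \<sigma> p t\<bar> \<le> \<bar>L p\<bar> * T" by (rule mult_left_mono) simp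
    moreover have "L p * tau \<sigma> p t \<le> \<bar>L p\<bar> * \<bar>tau \<sigma> p t\<bar>" by (metis abs_ge_self abs_mult)
    ultimately show "L p * tau \<sigma> p t \<le> \<bar>L p\<bar> * T" by linarith
  qed
qed

lemma A_bdd:
  fixes f :: "'p \<Rightarrow> real \<Rightarrow> real"
  assumes sw: "switching_signal P \<sigma>" and int: "\<forall>p\<in>P. set_integrable lborel {0..T} (f p)"
  shows "bdd_above ((\<lambda>t. accum P \<sigma> f t) ` {0..T})"
proof (rule bdd_aboveI2)
  fix t assume t: "t \<in> {0..T}"
  show "accum P \<sigma> f t \<le> (\<Sum>p\<in>P. LINT s:{0..T}|lborel. \<bar>f p s\<bar>)"
    unfolding accum_def
  proof (rule sum_mono)
    fix p assume p: "p \<in> P"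
    have "\<bar>LINT s:{0..t}|lborel. f p s * indicator {s. \<sigma> s = p} s\<bar> \<le> (LINT s:{0..T}|lborel. \<bar>f p s\<bar>)"
      by (rule c_abs_bound[OF sw]) (use t int p in auto)
    then show "(LINT s:{0..t}|lborel. f p s * indicator {s. \<sigma> s = p} s) \<le> (LINT s:{0..T}|lborel. \<bar>f p s\<bar>)"
      by linarith
  qed
qed



lemma part1:
  fixes P :: "'p set" and \<sigma> :: "real \<Rightarrow> 'p" and m :: nat
    and a :: "nat \<Rightarrow> 'p \<Rightarrow> real \<Rightarrow> real"
  assumes finP: "finite P"
    and sw: "switching_signal P \<sigma>"
    and loc_int: "\<forall>i\<in>{1..m}. \<forall>p\<in>P. \<forall>t\<ge>0. set_integrable lborel {0..t} (a i p)"
    and H: "\<forall>i\<in>{1..m}. \<forall>p\<in>P_inf P \<sigma>. \<bar>limsup_on \<sigma> p (a i p)\<bar> \<noteq> \<infinity>"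
  shows "Limsup at_top (\<lambda>T. ereal (\<Sum>i=1..m. (1/T) * (SUP t\<in>{0..T}. accum P \<sigma> (a i) t)))
      \<le> Limsup at_top (\<lambda>T. ereal (\<Sum>i=1..m. (1/T) *
            (SUP t\<in>{0..T}. \<Sum>p\<in>P_plus P \<sigma>. real_of_ereal (limsup_on \<sigma> p (a i p)) * tau \<sigma> p t)))"
proof (rule limsup_eps)
  show "(at_top :: real filter) \<noteq> bot" by simp
  have fm: "finite {1..m}" by simp
  fix e :: real assume e: "e > 0"
  define e' where "e' = e / (real m + 1)"
  have e': "e' > 0" unfolding e'_def using e by simp
  have me: "real m * e' \<le> e" unfolding e'_def using e by (simp add: field_simps)
  have ev: "eventually (\<lambda>T. \<forall>i\<in>{1..m}. \<forall>t\<in>{0..T}. accum P \<sigma> (a i) t \<le>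
      (\<Sum>p\<in>P_plus P \<sigma>. real_of_ereal (limsup_on \<sigma> p (a i p)) * tau \<sigma> p t) + e' * T) at_top"
  proof (rule eventually_ball_finite[OF fm], intro ballI)
    fix i assume i: "i \<in> {1..m}"
    show "eventually (\<lambda>T. \<forall>t\<in>{0..T}. accum P \<sigma> (a i) t \<le>
      (\<Sum>p\<in>P_plus P \<sigma>. real_of_ereal (limsup_on \<sigma> p (a i p)) * tau \<sigma> p t) + e' * T) at_top"
      by (rule accum_upper[OF finP sw _ _ e']) (use loc_int H i in auto)+
  qed
  have "eventually (\<lambda>T::real. T > 0) at_top" by (rule eventually_gt_at_top)
  with ev show "eventually (\<lambda>T. (\<Sum>i=1..m. (1/T) * (SUP t\<in>{0..T}. accum P \<sigma> (a i) t))
      \<le> (\<Sum>i=1..m. (1/T) * (SUP t\<in>{0..T}. \<Sum>p\<in>P_plus P \<sigma>. real_of_ereal (limsup_on \<sigma> p (a i p)) * tau \<sigma> p t)) + e) at_top"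
  proof eventually_elim
    case (elim T)
    have bd: "\<forall>i\<in>{1..m}. bdd_above ((\<lambda>t. \<Sum>p\<in>P_plus P \<sigma>. real_of_ereal (limsup_on \<sigma> p (a i p)) * tau \<sigma> p t) ` {0..T})"
      using G_bdd[OF sw] elim(2) by simp
    have "(\<Sum>i=1..m. (1/T) * (SUP t\<in>{0..T}. accum P \<sigma> (a i) t))
      \<le> (\<Sum>i=1..m. (1/T) * (SUP t\<in>{0..T}. \<Sum>p\<in>P_plus P \<sigma>. real_of_ereal (limsup_on \<sigma> p (a i p)) * tau \<sigma> p t)) + real (card {1..m}) * e'"
      by (rule sum_sup_bound[OF fm elim(2) elim(1) bd])
    then show ?case using me by simp
  qed
qed

lemma ev_lower:
  fixes P :: "'p set" and \<sigma> :: "real \<Rightarrow> 'p" and m :: nat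
    and a :: "nat \<Rightarrow> 'p \<Rightarrow> real \<Rightarrow> real"
  assumes finP: "finite P"
    and sw: "switching_signal P \<sigma>"
    and loc_int: "\<forall>i\<in>{1..m}. \<forall>p\<in>P. \<forall>t\<ge>0. set_integrable lborel {0..t} (a i p)"
    and H: "\<forall>i\<in>{1..m}. \<forall>p\<in>P_inf P \<sigma>. \<bar>liminf_on \<sigma> p (a i p)\<bar> \<noteq> \<infinity>"
    and e': "(e'::real) > 0"
  shows "eventually (\<lambda>T. \<forall>i\<in>{1..m}. \<forall>t\<in>{0..T}.
      (\<Sum>p\<in>P_plus P \<sigma>. real_of_ereal (liminf_on \<sigma> p (a i p)) * tau \<sigma> p t) \<le> accum P \<sigma> (a i) t + e' * T) at_top"
proof (rule eventually_ball_finite, simp, intro ballI)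
  fix i assume i: "i \<in> {1..m}"
  show "eventually (\<lambda>T. \<forall>t\<in>{0..T}.
      (\<Sum>p\<in>P_plus P \<sigma>. real_of_ereal (liminf_on \<sigma> p (a i p)) * tau \<sigma> p t) \<le> accum P \<sigma> (a i) t + e' * T) at_top"
    by (rule accum_lower[OF finP sw _ _ e']) (use loc_int H i in auto)+
qed

lemma part2a:
  fixes P :: "'p set" and \<sigma> :: "real \<Rightarrow> 'p" and m :: nat
    and a :: "nat \<Rightarrow> 'p \<Rightarrow> real \<Rightarrow> real"
  assumes finP: "finite P"
    and sw: "switching_signal P \<sigma>"
    and loc_int: "\<forall>i\<in>{1..m}. \<forall>p\<in>P. \<forall>t\<ge>0. set_integrable lborel {0..t} (a i p)"
    and H: "\<forall>i\<in>{1..m}. \<forall>p\<in>P_inf P \<sigma>. \<bar>liminf_on \<sigma> p (a i p)\<bar> \<noteq> \<infinity>"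
  shows "Limsup at_top (\<lambda>T. ereal (\<Sum>i=1..m. (1/T) * (SUP t\<in>{0..T}. accum P \<sigma> (a i) t)))
      \<ge> Limsup at_top (\<lambda>T. ereal (\<Sum>i=1..m. (1/T) *
            (SUP t\<in>{0..T}. \<Sum>p\<in>P_plus P \<sigma>. real_of_ereal (liminf_on \<sigma> p (a i p)) * tau \<sigma> p t)))"
proof (rule limsup_eps)
  show "(at_top :: real filter) \<noteq> bot" by simp
  have fm: "finite {1..m}" by simp
  fix e :: real assume e: "e > 0"
  define e' where "e' = e / (real m + 1)"
  have e': "e' > 0" unfolding e'_def using e by simp
  have me: "real m * e' \<le> e" unfolding e'_def using e by (simp add: field_simps)
  have "eventually (\<lambda>T::real. T > 0) at_top" by (rule eventually_gt_at_top)
  with ev_lower[OF finP sw loc_int H e'] show "eventually (\<lambda>T. (\<Sum>i=1..m. (1/T) * (SUP t\<in>{0..T}. \<Sum>p\<in>P_plus P \<sigma>. real_of_ereal (liminf_on \<sigma> p (a i p)) * tau \<sigma> p t))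
      \<le> (\<Sum>i=1..m. (1/T) * (SUP t\<in>{0..T}. accum P \<sigma> (a i) t)) + e) at_top"
  proof eventually_elim
    case (elim T)
    have bd: "\<forall>i\<in>{1..m}. bdd_above ((\<lambda>t. accum P \<sigma> (a i) t) ` {0..T})"
    proof
      fix i assume i: "i \<in> {1..m}"
      show "bdd_above ((\<lambda>t. accum P \<sigma> (a i) t) ` {0..T})"
        by (rule A_bdd[OF sw]) (use loc_int i elim(2) in auto)
    qed
    have "(\<Sum>i=1..m. (1/T) * (SUP t\<in>{0..T}. \<Sum>p\<in>P_plus P \<sigma>. real_of_ereal (liminf_on \<sigma> p (a i p)) * tau \<sigma> p t))
      \<le> (\<Sum>i=1..m. (1/T) * (SUP t\<in>{0..T}. accum P \<sigma> (a i) t)) + real (card {1..m}) * e'"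
      by (rule sum_sup_bound[OF fm elim(2) elim(1) bd])
    then show ?case using me by simp
  qed
qed

lemma part2b:
  fixes P :: "'p set" and \<sigma> :: "real \<Rightarrow> 'p" and m :: nat
    and a :: "nat \<Rightarrow> 'p \<Rightarrow> real \<Rightarrow> real"
  assumes finP: "finite P"
    and sw: "switching_signal P \<sigma>"
    and loc_int: "\<forall>i\<in>{1..m}. \<forall>p\<in>P. \<forall>t\<ge>0. set_integrable lborel {0..t} (a i p)"
    and H: "\<forall>i\<in>{1..m}. \<forall>p\<in>P_inf P \<sigma>. \<bar>liminf_on \<sigma> p (a i p)\<bar> \<noteq> \<infinity>"
  shows "Limsup at_top (\<lambda>t. ereal (\<Sum>i=1..m. max ((1/t) * accum P \<sigma> (a i) t) 0))
      \<ge> Limsup at_top (\<lambda>t. ereal (\<Sum>i=1..m.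
            max (\<Sum>p\<in>P_plus P \<sigma>. real_of_ereal (liminf_on \<sigma> p (a i p)) * rho \<sigma> p t) 0))"
proof (rule limsup_eps)
  show "(at_top :: real filter) \<noteq> bot" by simp
  fix e :: real assume e: "e > 0"
  define e' where "e' = e / (real m + 1)"
  have e': "e' > 0" unfolding e'_def using e by simp
  have me: "real m * e' \<le> e" unfolding e'_def using e by (simp add: field_simps)
  have "eventually (\<lambda>T::real. T > 0) at_top" by (rule eventually_gt_at_top)
  with ev_lower[OF finP sw loc_int H e'] show "eventually (\<lambda>t. (\<Sum>i=1..m. max (\<Sum>p\<in>P_plus P \<sigma>. real_of_ereal (liminf_on \<sigma> p (a i p)) * rho \<sigma> p t) 0)
      \<le> (\<Sum>i=1..m. max ((1/t) * accum P \<sigma> (a i) t) 0) + e) at_top"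
  proof eventually_elim
    case (elim t)
    have "(\<Sum>i=1..m. max (\<Sum>p\<in>P_plus P \<sigma>. real_of_ereal (liminf_on \<sigma> p (a i p)) * rho \<sigma> p t) 0)
        \<le> (\<Sum>i=1..m. max ((1/t) * accum P \<sigma> (a i) t) 0 + e')"
    proof (rule sum_mono)
      fix i assume i: "i \<in> {1..m}"
      let ?G = "\<Sum>p\<in>P_plus P \<sigma>. real_of_ereal (liminf_on \<sigma> p (a i p)) * tau \<sigma> p t"
      have "?G \<le> accum P \<sigma> (a i) t + e' * t" using elim(1) i elim(2) by auto
      then have "?G / t \<le> (1/t) * accum P \<sigma> (a i) t + e'" using elim(2) by (simp add: field_simps)
      moreover have "?G / t = (\<Sum>p\<in>P_plus P \<sigma>. real_of_ereal (liminf_on \<sigma> p (a i p)) * rho \<sigma> p t)"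
        unfolding sum_divide_distrib rho_def using elim(2) by simp
      ultimately show "max (\<Sum>p\<in>P_plus P \<sigma>. real_of_ereal (liminf_on \<sigma> p (a i p)) * rho \<sigma> p t) 0
          \<le> max ((1/t) * accum P \<sigma> (a i) t) 0 + e'" using e' by linarith
    qed
    also have "\<dots> = (\<Sum>i=1..m. max ((1/t) * accum P \<sigma> (a i) t) 0) + real m * e'"
      by (simp add: sum.distrib)
    finally show ?case using me by simp
  qed
qed

theorem lemma7:
  fixes P :: "'p set" and \<sigma> :: "real \<Rightarrow> 'p" and m :: nat
    and a :: "nat \<Rightarrow> 'p \<Rightarrow> real \<Rightarrow> real"
  assumes finP: "finite P"
    and sw: "switching_signal P \<sigma>"
    and loc_int: "\<forall>i\<in>{1..m}. \<forall>p\<in>P. \<forall>t\<ge>0. set_integrable lborel {0..t} (a i p)"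
  shows
   "((\<forall>i\<in>{1..m}. \<forall>p\<in>P_inf P \<sigma>. \<bar>limsup_on \<sigma> p (a i p)\<bar> \<noteq> \<infinity>) \<longrightarrow>
      Limsup at_top (\<lambda>T. ereal (\<Sum>i=1..m. (1/T) * (SUP t\<in>{0..T}. accum P \<sigma> (a i) t)))
      \<le> Limsup at_top (\<lambda>T. ereal (\<Sum>i=1..m. (1/T) *
            (SUP t\<in>{0..T}. \<Sum>p\<in>P_plus P \<sigma>. real_of_ereal (limsup_on \<sigma> p (a i p)) * tau \<sigma> p t))))
    \<and>
    ((\<forall>i\<in>{1..m}. \<forall>p\<in>P_inf P \<sigma>. \<bar>liminf_on \<sigma> p (a i p)\<bar> \<noteq> \<infinity>) \<longrightarrow>
      Limsup at_top (\<lambda>T. ereal (\<Sum>i=1..m. (1/T) * (SUP t\<in>{0..T}. accum P \<sigma> (a i) t)))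
      \<ge> Limsup at_top (\<lambda>T. ereal (\<Sum>i=1..m. (1/T) *
            (SUP t\<in>{0..T}. \<Sum>p\<in>P_plus P \<sigma>. real_of_ereal (liminf_on \<sigma> p (a i p)) * tau \<sigma> p t)))
      \<and>
      Limsup at_top (\<lambda>t. ereal (\<Sum>i=1..m. max ((1/t) * accum P \<sigma> (a i) t) 0))
      \<ge> Limsup at_top (\<lambda>t. ereal (\<Sum>i=1..m.
            max (\<Sum>p\<in>P_plus P \<sigma>. real_of_ereal (liminf_on \<sigma> p (a i p)) * rho \<sigma> p t) 0)))"
  using part1[OF finP sw loc_int] part2a[OF finP sw loc_int] part2b[OF finP sw loc_int]
  by blast

end
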